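(* Let $n \geq 2$ and let $BH_n$ be the $n$-dimensional balanced hypercube. Let $S=\{s_1,\dots,s_{2n-2}\}\subseteq V_0$ and $T=\{t_1,\dots,t_{2n-2}\}\subseteq V_1$ be sets of $2n-2$ distinct vertices each. For $i\in\{0,1,2,3\}$ let $BH_{n-1}^i$ be the subgraph of $BH_n$ induced by the vertices whose $(n-1)$-dimensional index $a_{n-1}$ equals $i$, and put $S_i=V(BH_{n-1}^i)\cap S$, $T_i=V(BH_{n-1}^i)\cap T$, $D_i=|T_i|-|S_i|$, with all indices $i$ taken modulo $4$. Then there exists $i\in\{0,1,2,3\}$ such that $|S_i|\geq |T_i|$ and $|S_{i+1}|\leq |T_{i+1}|$, and furthermore $D_{i+1}+D_{i+2}\geq 0$.
   Context: The $n$-dimensional balanced hypercube $BH_n$ ($n\ge 1$) has vertex set $\{(a_0,a_1,\dots,a_{n-1}) : a_i\in\{0,1,2,3\}\}$ ($4^n$ vertices). A vertex $v=(a_0,\dots,a_{n-1})$ is adjacent to exactly the following $2n$ vertices: $((a_0\pm 1)\bmod 4, a_1,\dots,a_{n-1})$, and, for each $1\le i\le n-1$, $((a_0\pm1)\bmod 4, a_1,\dots,a_{i-1},(a_i+(-1)^{a_0})\bmod 4,a_{i+1},\dots,a_{n-1})$. The coordinate $a_0$ is the inner index and $a_i$ ($1\le i\le n-1$) is the $i$-dimensional index. $BH_n$ is bipartite with bipartition $V_0$ (vertices with even inner index) and $V_1$ (vertices with odd inner index). Each $BH_{n-1}^i$ is isomorphic to $BH_{n-1}$. *)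

theory Defs
  imports Main
begin

definition bh_verts :: "nat \<Rightarrow> nat list set" where
  "bh_verts n = {a. length a = n \<and> (\<forall>k<n. a ! k < 4)}"

definition bh_adj :: "nat \<Rightarrow> nat list \<Rightarrow> nat list \<Rightarrow> bool" where
  "bh_adj n u v \<longleftrightarrow> u \<in> bh_verts n \<and> v \<in> bh_verts n \<and>
     ((v ! 0 = (u ! 0 + 1) mod 4 \<or> v ! 0 = (u ! 0 + 3) mod 4) \<and>
      ((\<forall>k. 1 \<le> k \<and> k < n \<longrightarrow> v ! k = u ! k) \<or>
       (\<exists>i. 1 \<le> i \<and> i < n \<and>
          v ! i = (if even (u ! 0) then (u ! i + 1) mod 4 else (u ! i + 3) mod 4) \<and>
          (\<forall>k. 1 \<le> k \<and> k < n \<and> k \<noteq> i \<longrightarrow> v ! k = u ! k))))"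

definition bh_V0 :: "nat \<Rightarrow> nat list set" where
  "bh_V0 n = {a \<in> bh_verts n. even (a ! 0)}"

definition bh_V1 :: "nat \<Rightarrow> nat list set" where
  "bh_V1 n = {a \<in> bh_verts n. odd (a ! 0)}"

definition bh_sub :: "nat \<Rightarrow> nat \<Rightarrow> nat list set" where
  "bh_sub n i = {a \<in> bh_verts n. a ! (n - 1) = i}"

end

theory Submission
  imports Defs
begin

lemma card_split4:
  assumes "A \<subseteq> bh_verts n" "finite A" "n \<ge> 1"
  shows "card A = card (bh_sub n 0 \<inter> A) + card (bh_sub n 1 \<inter> A) + card (bh_sub n 2 \<inter> A) + card (bh_sub n 3 \<inter> A)"
proof -
  have eq: "A = (\<Union>i<4. bh_sub n i \<inter> A)"
  proof
    show "A \<subseteq> (\<Union>i<4. bh_sub n i \<inter> A)"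
    proof
      fix a assume a: "a \<in> A"
      hence av: "a \<in> bh_verts n" using assms by auto
      have "a ! (n-1) < 4" using av assms(3) by (simp add: bh_verts_def)
      thus "a \<in> (\<Union>i<4. bh_sub n i \<inter> A)" using a av by (auto simp: bh_sub_def)
    qed
  qed auto
  have "card (\<Union>i<4. bh_sub n i \<inter> A) = (\<Sum>i<4. card (bh_sub n i \<inter> A))"
    by (rule card_UN_disjoint) (use assms in \<open>auto simp: bh_sub_def\<close>)
  also have "\<dots> = card (bh_sub n 0 \<inter> A) + card (bh_sub n 1 \<inter> A) + card (bh_sub n 2 \<inter> A) + card (bh_sub n 3 \<inter> A)"
    by (simp add: numeral_eq_Suc lessThan_Suc)
  finally show ?thesis using eq by simp
qed

theorem lemma7:
  fixes n :: nat and S T :: "nat list set"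
  assumes "n \<ge> 2"
    and "S \<subseteq> bh_V0 n" and "card S = 2 * n - 2"
    and "T \<subseteq> bh_V1 n" and "card T = 2 * n - 2"
  shows "\<exists>i<4.
     card (bh_sub n i \<inter> S) \<ge> card (bh_sub n i \<inter> T) \<and>
     card (bh_sub n ((i + 1) mod 4) \<inter> S) \<le> card (bh_sub n ((i + 1) mod 4) \<inter> T) \<and>
     (int (card (bh_sub n ((i + 1) mod 4) \<inter> T)) - int (card (bh_sub n ((i + 1) mod 4) \<inter> S)))
   + (int (card (bh_sub n ((i + 2) mod 4) \<inter> T)) - int (card (bh_sub n ((i + 2) mod 4) \<inter> S))) \<ge> 0"
proof -
  have fS: "finite S" using assms(1,3) by (intro card_ge_0_finite) simp
  have fT: "finite T" using assms(1,5) by (intro card_ge_0_finite) simp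
  have sS: "S \<subseteq> bh_verts n" using assms(2) by (auto simp: bh_V0_def)
  have sT: "T \<subseteq> bh_verts n" using assms(4) by (auto simp: bh_V1_def)
  define s0 where "s0 = card (bh_sub n 0 \<inter> S)"
  define s1 where "s1 = card (bh_sub n 1 \<inter> S)"
  define s2 where "s2 = card (bh_sub n 2 \<inter> S)"
  define s3 where "s3 = card (bh_sub n 3 \<inter> S)"
  define t0 where "t0 = card (bh_sub n 0 \<inter> T)"
  define t1 where "t1 = card (bh_sub n 1 \<inter> T)"
  define t2 where "t2 = card (bh_sub n 2 \<inter> T)"
  define t3 where "t3 = card (bh_sub n 3 \<inter> T)"
  have sum: "s0 + s1 + s2 + s3 = t0 + t1 + t2 + t3"
    using card_split4[OF sS fS] card_split4[OF sT fT] assms(1) assms(3,5)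
    unfolding s0_def s1_def s2_def s3_def t0_def t1_def t2_def t3_def by simp
  let ?P = "\<lambda>i. card (bh_sub n i \<inter> S) \<ge> card (bh_sub n i \<inter> T) \<and>
     card (bh_sub n ((i + 1) mod 4) \<inter> S) \<le> card (bh_sub n ((i + 1) mod 4) \<inter> T) \<and>
     (int (card (bh_sub n ((i + 1) mod 4) \<inter> T)) - int (card (bh_sub n ((i + 1) mod 4) \<inter> S)))
   + (int (card (bh_sub n ((i + 2) mod 4) \<inter> T)) - int (card (bh_sub n ((i + 2) mod 4) \<inter> S))) \<ge> 0"
  have m: "((0::nat)+1) mod 4 = 1" "((0::nat)+2) mod 4 = 2" "((1::nat)+1) mod 4 = 2" "((1::nat)+2) mod 4 = 3"
    "((2::nat)+1) mod 4 = 3" "((2::nat)+2) mod 4 = 0" "((3::nat)+1) mod 4 = 0" "((3::nat)+2) mod 4 = 1" by simp_all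
  have "?P 0 \<or> ?P 1 \<or> ?P 2 \<or> ?P 3"
    unfolding s0_def[symmetric] s1_def[symmetric] s2_def[symmetric] s3_def[symmetric]
      t0_def[symmetric] t1_def[symmetric] t2_def[symmetric] t3_def[symmetric]
    apply (simp only: m)
    unfolding s0_def[symmetric] s1_def[symmetric] s2_def[symmetric] s3_def[symmetric]
      t0_def[symmetric] t1_def[symmetric] t2_def[symmetric] t3_def[symmetric]
    using sum by linarith
  moreover have "(0::nat) < 4" "(1::nat) < 4" "(2::nat) < 4" "(3::nat) < 4" by simp_all
  ultimately show ?thesis by blast
qed

end
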